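(* Let $\sigma(x)=\mathrm{e}^{-x^2/2}$ and let $p_m(x)=\pi^{-1/4}2^{-m/2}(m!)^{-1/2}H_m(x)$ be the orthonormal Hermite polynomials on $\mathbf{R}$ (so $\int_{\mathbf{R}}p_mp_k\mathrm{e}^{-x^2}\,\mathrm{d}x=\delta_{m,k}$), where $H_m$ are the Hermite polynomials. Let $z=\mathrm{e}^{i\theta}$ with $|\theta|<\pi/4$, put $p_{m,z}(x)=z^{1/2}p_m(zx)$ and $N_{m,z}=\int_{-\infty}^\infty|p_{m,z}(x)\sigma(zx)|^2\,\mathrm{d}x$ with $\sigma(zx)=\mathrm{e}^{-z^2x^2/2}$, and let $s_\theta=(\cos 2\theta)^{1/2}$. Then for all non-negative integers $n$, \[ N_{2n,z}\le\pi(n+1)^{1/2}\,2^{4n+2}\,s_\theta^{-4n-1}. \]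
   Context: $H_m(x)=(2x)^m-\frac{m!}{1!(m-2)!}(2x)^{m-2}+\frac{m!}{2!(m-4)!}(2x)^{m-4}-\cdots$ are the (physicists') Hermite polynomials; $z^{1/2}$ is the principal square root. *)

theory Defs
  imports "HOL-Analysis.Analysis"
begin

definition hermite :: "nat \<Rightarrow> complex \<Rightarrow> complex" where
  "hermite m x = (\<Sum>k\<le>m div 2. (-1) ^ k * of_nat (fact m div (fact k * fact (m - 2 * k)))
                                   * (2 * x) ^ (m - 2 * k))"

definition hermite_on :: "nat \<Rightarrow> complex \<Rightarrow> complex" where
  "hermite_on m x = complex_of_real (pi powr (-1/4) * 2 powr (- real m / 2) / sqrt (fact m))
                    * hermite m x"

definition hermite_rot :: "nat \<Rightarrow> complex \<Rightarrow> real \<Rightarrow> complex" where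
  "hermite_rot m z x = csqrt z * hermite_on m (z * complex_of_real x)"

definition N_integrand :: "nat \<Rightarrow> complex \<Rightarrow> real \<Rightarrow> real" where
  "N_integrand m z x = (cmod (hermite_rot m z x * exp (- (z * complex_of_real x)\<^sup>2 / 2)))\<^sup>2"

definition N_mz :: "nat \<Rightarrow> complex \<Rightarrow> real" where
  "N_mz m z = (\<integral>x. N_integrand m z x \<partial>lborel)"

end

theory Submission
  imports Defs "HOL-Probability.Probability"
begin

lemma fact_2Suc: "(fact (2 * Suc j) :: real) = (2*real j+2)*(2*real j+1) * fact (2*j)"
proof -
  have "2 * Suc j = Suc (Suc (2*j))" by simp
  then show ?thesis by (simp add: algebra_simps)
qed

lemma cb_aux: fixes r F A :: real assumes "r+1 \<noteq> 0" "F \<noteq> 0"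
  shows "(2*r+2)*(2*r+1)*A/((r+1)*F)^2 = 2*(2*r+1)/(r+1)*(A/F^2)"
proof -
  have "(2*r+2)*(2*r+1)*A/((r+1)*F)^2 = (2*(2*r+1)*A*(r+1))/((r+1)*(F^2*(r+1)))"
    by (simp add: power2_eq_square algebra_simps)
  also have "\<dots> = (2*(2*r+1)*A)/((r+1)*F^2)" using assms by simp
  finally show ?thesis by simp
qed

lemma cb_lower: "(16::real)^j \<le> (4*real j+1) * (fact (2*j) / (fact j)^2)^2"
proof (induction j)
  case 0 then show ?case by simp
next
  case (Suc j)
  define b :: real where "b = fact (2*j) / (fact j)^2"
  have b': "fact (2*Suc j) / (fact (Suc j))^2 = 2*(2*real j+1)/(real j+1) * b"
  proof -
    have f: "(fact (Suc j)::real) = (real j+1) * fact j" by (simp add: algebra_simps)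
    have "(real j+1) \<noteq> 0" "(fact j::real) \<noteq> 0" by auto
    then show ?thesis unfolding b_def fact_2Suc f by (rule cb_aux)
  qed
  have IH: "16^j \<le> (4*real j+1) * b^2" using Suc b_def by (simp add: add.commute)
  have key: "16*(4*real j+1)*(j+1)^2 \<le> 4*(4*j+5)*(2*j+1)^2"
    by (simp add: algebra_simps power2_eq_square)
  have "(16::real)^Suc j = 16 * 16^j" by simp
  also have "\<dots> \<le> 16 * ((4*real j+1) * b^2)" using IH by simp
  also have "\<dots> = (16*(4*real j+1)*(j+1)^2) * (b^2/(j+1)^2)" by (simp add: field_simps)
  also have "\<dots> \<le> (4*(4*j+5)*(2*j+1)^2) * (b^2/(j+1)^2)"
    by (rule mult_right_mono[OF key]) simp
  also have "\<dots> = (4 * real (Suc j) + 1) * (2*(2*real j+1)/(real j+1) * b)^2"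
    by (simp add: field_simps power2_eq_square)
  finally show ?case using b' by simp
qed

lemma cb_upper: "(3*n+1) * (fact (2*n) / (fact n)^2)^2 \<le> (16::real)^n"
proof (induction n)
  case 0 then show ?case by simp
next
  case (Suc j)
  define b :: real where "b = fact (2*j) / (fact j)^2"
  have b': "fact (2*Suc j) / (fact (Suc j))^2 = 2*(2*real j+1)/(real j+1) * b"
  proof -
    have f: "(fact (Suc j)::real) = (real j+1) * fact j" by (simp add: algebra_simps)
    have "(real j+1) \<noteq> 0" "(fact j::real) \<noteq> 0" by auto
    then show ?thesis unfolding b_def fact_2Suc f by (rule cb_aux)
  qed
  have IH: "(3*j+1) * b^2 \<le> 16^j" using Suc b_def by (simp add: add.commute)
  have key: "4*(3*j+4)*(2*real j+1)^2 \<le> 16*(3*j+1)*(j+1)^2"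
    by (simp add: algebra_simps power2_eq_square)
  have "(3 * real (Suc j) + 1) * (2*(2*real j+1)/(real j+1) * b)^2 = (4*(3*j+4)*(2*real j+1)^2) * (b^2/(j+1)^2)"
    by (simp add: field_simps power2_eq_square)
  also have "\<dots> \<le> (16*(3*j+1)*(j+1)^2) * (b^2/(j+1)^2)"
    by (rule mult_right_mono[OF key]) simp
  also have "\<dots> = 16 * ((3*j+1) * b^2)" by (simp add: field_simps)
  also have "\<dots> \<le> 16 * 16^j" using IH by simp
  finally show ?case using b' by simp
qed

lemma pow_le_exp: assumes "0 \<le> y" shows "y^j / fact j \<le> exp (y::real)"
proof -
  have s: "(\<lambda>n. y^n /\<^sub>R fact n) sums exp y" by (rule exp_converges)
  have "sum (\<lambda>n. y^n /\<^sub>R fact n) {j} \<le> suminf (\<lambda>n. y^n /\<^sub>R fact n)"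
    by (rule sum_le_suminf) (use s assms in \<open>auto simp: sums_iff\<close>)
  then show ?thesis using s by (simp add: sums_iff divide_inverse mult.commute)
qed

lemma four_pow_le: "(4::real)^j \<le> sqrt (4*real j+1) * (fact (2*j) / (fact j)^2)"
proof -
  have 1: "sqrt ((16::real)^j) \<le> sqrt ((4*real j+1) * (fact (2*j) / (fact j)^2)^2)"
    by (rule real_sqrt_le_mono[OF cb_lower])
  have e: "(16::real)^j = (4^j)^2"
    unfolding power2_eq_square power_mult_distrib[symmetric] by simp
  have 2: "sqrt ((16::real)^j) = 4^j"
    unfolding e by (rule real_sqrt_abs[THEN trans]) simp
  have 3: "sqrt ((4*real j+1) * (fact (2*j) / (fact j)^2)^2) = sqrt (4*real j+1) * (fact (2*j) / (fact j)^2)"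
    unfolding real_sqrt_mult by simp
  show ?thesis using 1 unfolding 2 3 .
qed

lemma term_bound:
  assumes c: "0 < c" "c \<le> 1" and k: "k \<le> n"
  shows "fact(2*n)/(fact k * fact(2*n-2*k)) * fact(n-k) * (10/c)^(n-k)
         \<le> (1/c)^n * (fact(2*n)/fact n) * sqrt(4*real n+1) * (of_nat (n choose k) * 1^k * (5/2)^(n-k))"
proof -
  define j where "j = n - k"
  have nk: "2*n-2*k = 2*j" using j_def by simp
  define q :: real where "q = fact (2*j) / (fact j)^2"
  have qpos: "q > 0" unfolding q_def by simp
  have f2j: "(fact (2*j)::real) = q * (fact j)^2" unfolding q_def by simp
  have bin: "real (n choose k) = fact n / (fact k * fact j)"
    unfolding j_def using k by (rule binomial_fact)
  have "(4::real)^j \<le> sqrt (4*real j+1) * q" unfolding q_def by (rule four_pow_le)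
  also have "\<dots> \<le> sqrt (4*real n+1) * q"
    using qpos by (intro mult_right_mono) (auto simp: j_def)
  finally have h4: "(4::real)^j \<le> sqrt (4*real n+1) * q" .
  have cpow: "(1/c)^j \<le> (1/c)^n"
    using c by (intro power_increasing) (auto simp: j_def)
  have t: "(10/c)^j = (1/c)^j * ((5/2)^j * 4^j)"
  proof -
    have "(10/c) = (1/c) * ((5/2) * 4)" by simp
    then show ?thesis by (simp only: power_mult_distrib)
  qed
  have aux2: "F2/(K*(q*J^2)) * J * (P*X) = F2/(K*J) * P * (X/q)"
    if "K \<noteq> 0" "J \<noteq> 0" "q \<noteq> 0" for F2 K J P X q :: real
    using that by (simp add: field_simps power2_eq_square)
  have "fact(2*n)/(fact k * fact(2*n-2*k)) * fact(n-k) * (10/c)^(n-k)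
        = (fact(2*n)/(fact k * fact j)) * (1/c)^j * ((5/2)^j * 4^j / q)"
    unfolding nk j_def[symmetric] f2j t using qpos by (intro aux2) auto
  also have "\<dots> \<le> (fact(2*n)/(fact k * fact j)) * (1/c)^n * ((5/2)^j * (sqrt (4*real n+1) * q) / q)"
  proof -
    have "(5/2::real)^j * 4^j \<le> (5/2)^j * (sqrt (4*real n+1) * q)"
      using h4 by (intro mult_left_mono) auto
    then have "(5/2::real)^j * 4^j / q \<le> (5/2)^j * (sqrt (4*real n+1) * q) / q"
      using qpos by (intro divide_right_mono) auto
    moreover have "0 \<le> (5/2::real)^j * 4^j / q" using qpos by simp
    moreover have "0 \<le> (fact(2*n)/(fact k * fact j)::real)" by simp
    ultimately show ?thesis using cpow c
      by (intro mult_mono mult_left_mono) auto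
  qed
  also have "\<dots> = (1/c)^n * (fact(2*n)/fact n) * sqrt(4*real n+1) * (of_nat (n choose k) * 1^k * (5/2)^(n-k))"
  proof -
    have aux3: "F2/(K*J) * P * (X*(S*q)/q) = P * (F2/N) * S * (N/(K*J) * 1 * X)"
      if "K \<noteq> 0" "J \<noteq> 0" "q \<noteq> 0" "N \<noteq> 0" for F2 K J P X q S N :: real
      using that by (simp add: field_simps)
    show ?thesis unfolding bin j_def[symmetric] power_one using qpos by (intro aux3) auto
  qed
  finally show ?thesis .
qed

lemma sum_bound:
  assumes c: "0 < c" "c \<le> 1"
  shows "(\<Sum>k\<le>n. fact(2*n)/(fact k * fact(2*n-2*k)) * fact(n-k) * (10/c)^(n-k))
         \<le> (1/c)^n * (fact(2*n)/fact n) * sqrt(4*real n+1) * (7/2)^n"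
proof -
  have "(\<Sum>k\<le>n. fact(2*n)/(fact k * fact(2*n-2*k)) * fact(n-k) * (10/c)^(n-k))
     \<le> (\<Sum>k\<le>n. (1/c)^n * (fact(2*n)/fact n) * sqrt(4*real n+1) * (of_nat (n choose k) * 1^k * (5/2)^(n-k)))"
    using c by (intro sum_mono term_bound) auto
  also have "\<dots> = (1/c)^n * (fact(2*n)/fact n) * sqrt(4*real n+1) * (1 + 5/2)^n"
    by (simp only: sum_distrib_left[symmetric] binomial_ring[of "1::real" "5/2" n])
  finally show ?thesis by simp
qed

lemma pow_le_exp': assumes "0 \<le> y" "0 < mu"
  shows "y^j \<le> fact j * mu^j * exp (y / mu::real)"
proof -
  have "(y/mu)^j / fact j \<le> exp (y/mu)" using assms by (intro pow_le_exp) auto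
  then have "fact j * ((y/mu)^j / fact j) \<le> fact j * exp (y/mu)" by (intro mult_left_mono) auto
  then have "(y/mu)^j \<le> fact j * exp (y/mu)" by simp
  then have "mu^j * (y/mu)^j \<le> mu^j * (fact j * exp (y/mu))" using assms by (intro mult_left_mono) auto
  moreover have "mu^j * (y/mu)^j = y^j" using assms by (simp add: power_divide)
  ultimately show ?thesis by (simp add: ac_simps)
qed

lemma hermite_bound:
  assumes "cmod w = r" "0 < mu"
  shows "cmod (hermite (2*n) w) \<le>
    (\<Sum>k\<le>n. fact(2*n)/(fact k * fact(2*n-2*k)) * fact(n-k) * mu^(n-k)) * exp (4*r^2/mu)"
proof -
  have r: "0 \<le> r" using assms(1) by auto
  have "cmod (hermite (2*n) w) \<le> (\<Sum>k\<le>n. cmod ((-1) ^ k * of_nat (fact (2*n) div (fact k * fact (2*n - 2 * k)))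
                                   * (2 * w) ^ (2*n - 2 * k)))"
    unfolding hermite_def by simp (rule norm_sum)
  also have "\<dots> \<le> (\<Sum>k\<le>n. fact(2*n)/(fact k * fact(2*n-2*k)) * fact(n-k) * mu^(n-k) * exp (4*r^2/mu))"
  proof (rule sum_mono)
    fix k assume k: "k \<in> {..n}"
    have e: "2*n-2*k = 2*(n-k)" by simp
    have "cmod ((-1) ^ k * of_nat (fact (2*n) div (fact k * fact (2*n - 2 * k))) * (2 * w) ^ (2*n - 2 * k))
       = real (fact (2*n) div (fact k * fact (2*n - 2 * k))) * (4*r^2)^(n-k)"
      unfolding e norm_mult norm_power using assms(1)
      by (simp add: power_mult power_mult_distrib)
    also have "\<dots> \<le> fact(2*n)/(fact k * fact(2*n-2*k)) * (fact(n-k) * mu^(n-k) * exp (4*r^2/mu))"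
    proof (rule mult_mono)
      show "real (fact (2*n) div (fact k * fact (2*n - 2 * k))) \<le> fact(2*n)/(fact k * fact(2*n-2*k))"
        using of_nat_div_le_of_nat[of "fact (2*n)" "fact k * fact (2*n - 2 * k)", where 'a=real]
        by simp
      show "(4*r^2)^(n-k) \<le> fact(n-k) * mu^(n-k) * exp (4*r^2/mu)"
        using assms by (intro pow_le_exp') auto
    qed auto
    finally show "cmod ((-1) ^ k * of_nat (fact (2*n) div (fact k * fact (2*n - 2 * k))) * (2 * w) ^ (2*n - 2 * k))
       \<le> fact(2*n)/(fact k * fact(2*n-2*k)) * fact(n-k) * mu^(n-k) * exp (4*r^2/mu)"
      by (simp add: ac_simps)
  qed
  also have "\<dots> = (\<Sum>k\<le>n. fact(2*n)/(fact k * fact(2*n-2*k)) * fact(n-k) * mu^(n-k)) * exp (4*r^2/mu)"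
    by (simp add: sum_distrib_right)
  finally show ?thesis .
qed

lemma N_eq:
  "N_integrand m (cis t) x =
     (pi powr (-1/4) * 2 powr (- real m / 2) / sqrt (fact m))^2 * (cmod (hermite m (cis t * complex_of_real x)))^2
      * exp (- (cos (2*t) * x^2))"
proof -
  define C where "C = pi powr (-1/4) * 2 powr (- real m / 2) / sqrt (fact m)"
  have C: "0 \<le> C" unfolding C_def by simp
  have re: "Re (- (cis t * complex_of_real x)\<^sup>2 / 2) = - (cos (2*t) * x^2) / 2"
  proof -
    have cd: "cos (2*t) = (cos t)^2 - (sin t)^2" by (rule cos_double)
    show ?thesis unfolding cd by (simp add: power2_eq_square field_simps)
  qed
  have ex: "(exp (- (cos (2*t) * x^2) / 2))^2 = exp (- (cos (2*t) * x^2))"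
    by (simp add: power2_eq_square exp_add[symmetric])
  have ex2: "(exp (- (cos (2*t) * x^2 / 2)))^2 = exp (- (cos (2*t) * x^2))"
    by (simp add: power2_eq_square exp_add[symmetric])
  have re2: "Re ((cis t)^2) = cos (2*t)" unfolding cos_double by (simp add: power2_eq_square)
  show ?thesis
    unfolding N_integrand_def hermite_rot_def hermite_on_def C_def[symmetric]
    using C by (simp add: norm_mult re re2 power_mult_distrib ex ex2)
qed


lemma main_ineq:
  fixes Q t :: real
  assumes Q: "Q = fact (2*n) / (fact n)^2" and t: "t = (7/2)^n"
  shows "Q*(4*real n+1)*(t^2/4^n)* sqrt 5 \<le> 4*pi* sqrt(real n+1)*16^n"
proof -
  have Qpos: "0 \<le> Q" unfolding Q by simp
  have h1: "sqrt(3*real n+1) * Q \<le> 4^n"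
  proof -
    have "sqrt ((3*real n+1) * Q^2) \<le> sqrt (16^n)" unfolding Q by (rule real_sqrt_le_mono[OF cb_upper])
    moreover have "(16::real)^n = (4^n)^2"
      unfolding power2_eq_square power_mult_distrib[symmetric] by simp
    ultimately show ?thesis using Qpos by (simp add: real_sqrt_mult)
  qed
  have h2: "4*real n+1 \<le> 4 * sqrt(real n+1) * sqrt(3*real n+1)"
  proof -
    have "sqrt ((4*real n+1)^2) \<le> sqrt (16*((real n+1)*(3*real n+1)))"
      by (intro real_sqrt_le_mono) (simp add: power2_eq_square algebra_simps)
    then show ?thesis by (simp add: real_sqrt_mult)
  qed
  have h3: "sqrt 5 \<le> pi"
  proof -
    have "sqrt 5 \<le> sqrt (3^2)" by (intro real_sqrt_le_mono) simp
    then show ?thesis using pi_gt3 by simp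
  qed
  have h4: "t^2 \<le> 16^n"
  proof -
    have "t^2 = (49/4)^n" unfolding t by (simp add: power_even_eq[symmetric] power_mult_distrib[symmetric] power2_eq_square)
    also have "\<dots> \<le> 16^n" by (intro power_mono) auto
    finally show ?thesis .
  qed
  have tq: "0 \<le> t^2/4^n" by simp
  have "Q*(4*real n+1)*(t^2/4^n)* sqrt 5 \<le> Q*(4 * sqrt(real n+1) * sqrt(3*real n+1))*(t^2/4^n)*pi"
    using Qpos tq h2 h3 by (intro mult_mono) auto
  also have "\<dots> = 4*pi* sqrt(real n+1) * (sqrt(3*real n+1) * Q) * (t^2/4^n)" by (simp add: ac_simps)
  also have "\<dots> \<le> 4*pi* sqrt(real n+1) * 4^n * (t^2/4^n)"
    using h1 tq by (intro mult_right_mono mult_left_mono) auto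
  also have "\<dots> = 4*pi* sqrt(real n+1) * t^2" by simp
  also have "\<dots> \<le> 4*pi* sqrt(real n+1) * 16^n" using h4 by (intro mult_left_mono) auto
  finally show ?thesis by simp
qed

lemma final_ineq:
  assumes c: "0 < c" "c \<le> 1"
  shows "(pi powr (-1/4) * 2 powr (- real (2*n) / 2) / sqrt (fact (2*n)))^2
    * ((1/c)^n * (fact(2*n)/fact n) * sqrt(4*real n+1) * (7/2)^n)^2 * sqrt(5*pi/c)
    \<le> pi * sqrt(real n + 1) * 2^(4*n+2) / (sqrt c)^(4*n+1)"
proof -
  define Q :: real where "Q = fact (2*n) / (fact n)^2"
  define t :: real where "t = (7/2)^n"
  define W where "W = (1/c)^(2*n) / sqrt c"
  have W: "0 \<le> W" unfolding W_def using c by simp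
  have p1: "(pi powr (-1/4))^2 = 1/sqrt pi"
  proof -
    have "(pi powr (-1/4))^2 = pi powr (-1/4) * pi powr (-1/4)" by (rule power2_eq_square)
    also have "\<dots> = pi powr (-1/4 + -1/4)" by (rule powr_add[symmetric])
    also have "\<dots> = pi powr (-(1/2))" by simp
    also have "\<dots> = inverse (pi powr (1/2))" by (rule powr_minus)
    also have "\<dots> = inverse (sqrt pi)" by (simp add: powr_half_sqrt)
    finally show ?thesis by (simp add: inverse_eq_divide)
  qed
  have p2: "(2 powr (- real (2*n) / 2))^2 = 1/(4::real)^n"
  proof -
    have a2: "((2::real)^n)^2 = 4^n"
    proof -
      have "((2::real)^n)^2 = (2^2)^n" by (simp only: power_mult[symmetric] mult.commute)
      then show ?thesis by simp
    qed
    have m: "- real (2*n) / 2 = - real n" by simp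
    have "2 powr (- real (2*n) / 2) = inverse ((2::real)^n)" unfolding m powr_minus by (simp add: powr_realpow)
    then have "(2 powr (- real (2*n) / 2))^2 = inverse (((2::real)^n)^2)" by (simp only: power_inverse)
    then show ?thesis by (simp only: a2 inverse_eq_divide)
  qed
  have p3: "(sqrt (fact (2*n)))^2 = (fact (2*n)::real)" by simp
  have sc: "(sqrt c)^(4*n+1) = c^(2*n) * sqrt c"
  proof -
    have "(sqrt c)^(4*n+1) = ((sqrt c)^2)^(2*n) * sqrt c" by (simp add: power_mult[symmetric] ac_simps)
    then show ?thesis using c by simp
  qed
  have s5: "sqrt (5*pi/c) = sqrt 5 * sqrt pi / sqrt c" by (simp add: real_sqrt_mult real_sqrt_divide)
  have fpos: "(fact n::real) > 0" "(fact (2*n)::real) > 0" by auto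
  define X :: real where "X = (1/c)^n"
  have X2: "X^2 = 1 / c^(2*n)" unfolding X_def by (simp add: power_mult[symmetric] power_one_over mult.commute)
  have R: "(sqrt (4*real n+1))^2 = 4*real n+1" by simp
  have aux1: "1/P * (1/Fr) / F * (X^2 * (F^2/G^2) * R * T^2) * (s5*P/S) = F/G^2 * R * (T^2/Fr) * s5 * (X^2/S)"
    if "P \<noteq> 0" "Fr \<noteq> 0" "F \<noteq> 0" "G \<noteq> 0" "S \<noteq> 0" for P Fr F G S X R T s5 :: real
    using that by (simp add: field_simps power2_eq_square)
  have "(pi powr (-1/4) * 2 powr (- real (2*n) / 2) / sqrt (fact (2*n)))^2
    * ((1/c)^n * (fact(2*n)/fact n) * sqrt(4*real n+1) * (7/2)^n)^2 * sqrt(5*pi/c)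
    = (Q*(4*real n+1)*(t^2/4^n)* sqrt 5) * (X^2 / sqrt c)"
    unfolding power_mult_distrib[of _ _ 2] power_divide[of _ _ 2] p1 p2 p3 s5 R X_def[symmetric] t_def[symmetric] Q_def
    using c fpos by (intro aux1) auto
  also have "\<dots> \<le> (4*pi* sqrt(real n+1)*16^n) * (X^2 / sqrt c)"
    using c by (intro mult_right_mono[OF main_ineq[OF Q_def t_def]]) auto
  also have "\<dots> = pi * sqrt(real n + 1) * 2^(4*n+2) / (sqrt c)^(4*n+1)"
  proof -
    have e2: "(2::real)^(4*n+2) = 4 * 16^n" by (simp add: power_add power_mult)
    have aux2: "4*p*q*u*(Y/S) = p*q*(4*u)/(Z*S)" if "Y = 1/Z" "Z \<noteq> 0" "S \<noteq> 0" for p q u Y S Z :: real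
      using that by (simp add: field_simps)
    show ?thesis unfolding sc e2 using c X2 by (intro aux2) auto
  qed
  finally show ?thesis .
qed


theorem theorem5:
  fixes \<theta> :: real and n :: nat
  assumes "\<bar>\<theta>\<bar> < pi / 4"
  defines "z \<equiv> cis \<theta>"
  defines "s \<equiv> sqrt (cos (2 * \<theta>))"
  shows "integrable lborel (N_integrand (2 * n) z)
         \<and> N_mz (2 * n) z \<le> pi * sqrt (real n + 1) * 2 ^ (4 * n + 2) / s ^ (4 * n + 1)"
proof -
  define c where "c = cos (2*\<theta>)"
  have c: "0 < c" "c \<le> 1"
    unfolding c_def using assms(1) by (auto intro!: cos_gt_zero_pi)
  define C0 where "C0 = pi powr (-1/4) * 2 powr (- real (2*n) / 2) / sqrt (fact (2*n))"
  define B where "B = (1/c)^n * (fact(2*n)/fact n) * sqrt(4*real n+1) * (7/2)^n"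
  define wd where "wd = sqrt (5/(2*c))"
  define K where "K = C0^2 * B^2 * sqrt(2*pi*wd^2)"
  have wd2: "wd^2 = 5/(2*c)" unfolding wd_def using c by simp
  have sK: "sqrt(2*pi*wd^2) = sqrt(5*pi/c)" unfolding wd2 using c by (simp add: field_simps)
  have sKpos: "sqrt(2*pi*wd^2) > 0" unfolding sK using c by simp
  have hb: "cmod (hermite (2*n) (z * complex_of_real x)) \<le> B * exp(4*x^2/(10/c))" for x
  proof -
    have nz: "cmod (z * complex_of_real x) = \<bar>x\<bar>" unfolding z_def by (simp add: norm_mult)
    have "cmod (hermite (2*n) (z * complex_of_real x)) \<le>
      (\<Sum>k\<le>n. fact(2*n)/(fact k * fact(2*n-2*k)) * fact(n-k) * (10/c)^(n-k)) * exp (4*\<bar>x\<bar>^2/(10/c))"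
      using c by (intro hermite_bound[OF nz]) auto
    also have "\<dots> \<le> B * exp (4*\<bar>x\<bar>^2/(10/c))"
      unfolding B_def by (intro mult_right_mono sum_bound c) auto
    finally show ?thesis by simp
  qed
  have pt: "N_integrand (2*n) z x \<le> K * normal_density 0 wd x" for x
  proof -
    have "N_integrand (2*n) z x = C0^2 * (cmod (hermite (2*n) (z * complex_of_real x)))^2 * exp (- (c * x^2))"
      unfolding z_def C0_def c_def by (rule N_eq)
    also have "\<dots> \<le> C0^2 * (B * exp(4*x^2/(10/c)))^2 * exp (- (c * x^2))"
      using hb[of x] by (intro mult_right_mono mult_left_mono power_mono) auto
    also have "\<dots> = C0^2 * B^2 * exp (- (c * x^2) / 5)"
    proof -
      have "(exp(4*x^2/(10/c)))^2 * exp (- (c * x^2)) = exp (- (c * x^2) / 5)"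
        unfolding power2_eq_square exp_add[symmetric] by (simp add: field_simps)
      then show ?thesis by (simp add: power_mult_distrib)
    qed
    also have "\<dots> = K * normal_density 0 wd x"
      unfolding K_def normal_density_def wd2 using sKpos c by (simp add: field_simps)
    finally show ?thesis .
  qed
  have meas: "N_integrand (2*n) z \<in> borel_measurable lborel"
    unfolding N_integrand_def hermite_rot_def hermite_on_def hermite_def by measurable
  have wdpos: "0 < wd" unfolding wd_def using c by simp
  have intG: "integrable lborel (\<lambda>x. K * normal_density 0 wd x)"
    using wdpos by (intro integrable_mult_right integrable_normal_density)
  have nn: "0 \<le> N_integrand (2*n) z x" for x unfolding N_integrand_def by simp
  have int: "integrable lborel (N_integrand (2*n) z)"
  proof (rule Bochner_Integration.integrable_bound[OF intG meas], rule AE_I2)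
    fix x show "norm (N_integrand (2*n) z x) \<le> norm (K * normal_density 0 wd x)"
      using pt[of x] nn[of x] by simp
  qed
  have "N_mz (2*n) z \<le> (\<integral>x. K * normal_density 0 wd x \<partial>lborel)"
    unfolding N_mz_def using int intG pt by (intro integral_mono) auto
  also have "\<dots> = K" using wdpos integrable_normal_density[of wd 0] integral_normal_density[of wd 0] by simp
  also have "\<dots> \<le> pi * sqrt (real n + 1) * 2 ^ (4 * n + 2) / s ^ (4 * n + 1)"
    unfolding K_def sK C0_def B_def s_def c_def[symmetric] by (rule final_ineq[OF c])
  finally show ?thesis using int by simp
qed

end
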